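(* $C_{AD}(3,4)=C_{CD}(3,4)=4$.
   Context: There are $n$ nodes labeled $1,\dots,n$ (here $n=3$); node $i$ privately holds an input $x_i\in\{1,\dots,M\}$ (here $M=4$). Communication is over private point-to-point links of a fully connected synchronous network. A deterministic protocol $P$ is a fixed finite schedule of steps $l=1,\dots,L(P)$; in step $l$ a prescribed node $T_l$ sends to a prescribed node $R_l\neq T_l$ one symbol $f_l(x_{T_l},T_l^+(l))$, where $T_l^+(l)$ is the sequence of symbols $T_l$ has received in steps $1,\dots,l-1$; only $R_l$ receives it. Its complexity is $C(P)=\sum_{l}\log_2 S_l(P)$, with $S_l(P)$ the number of distinct values of the step-$l$ symbol over all inputs in $\{1,\dots,M\}^n$. At the end each node $i$ outputs a bit $EQ_i$ depending on $x_i$ and the symbols it received. $P$ solves MEQ-AD$(n,M)$ if for every input, $EQ_1=\cdots=EQ_n=0$ iff $x_1=\cdots=x_n$; $P$ solves MEQ-CD$(n,M)$ if for every input, $EQ_n=0$ iff $x_1=\cdots=x_n$. $C_{AD}(n,M)$ and $C_{CD}(n,M)$ are the infima of $C(P)$ over protocols solving MEQ-AD$(n,M)$, respectively MEQ-CD$(n,M)$. *)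

theory Defs
  imports Complex_Main "HOL-Library.FuncSet"
begin

text \<open>Symbols are encoded as natural numbers (any finite symbol alphabet embeds
injectively into nat, which does not change the counts S_l).
A step is (T, R, f): sender T, receiver R, and the message function f applied
to the sender's input and the list of symbols the sender has received so far
(in chronological order).  A protocol is a list of steps together with an
output function: out i xi rcv is the bit EQ_i (False = 0, True = 1).\<close>

type_synonym step = "nat \<times> nat \<times> (nat \<Rightarrow> nat list \<Rightarrow> nat)"
type_synonym protocol = "step list \<times> (nat \<Rightarrow> nat \<Rightarrow> nat list \<Rightarrow> bool)"

definition sender :: "step \<Rightarrow> nat" where "sender s = fst s"
definition receiver :: "step \<Rightarrow> nat" where "receiver s = fst (snd s)"
definition msgfun :: "step \<Rightarrow> nat \<Rightarrow> nat list \<Rightarrow> nat" where "msgfun s = snd (snd s)"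

fun exec :: "step list \<Rightarrow> (nat \<Rightarrow> nat) \<Rightarrow> (nat \<times> nat) list \<Rightarrow> nat list" where
  "exec [] x h = []"
| "exec (p # ps) x h =
     (let s = msgfun p (x (sender p)) (map snd (filter (\<lambda>(r, _). r = sender p) h))
      in s # exec ps x (h @ [(receiver p, s)]))"

definition symbols :: "step list \<Rightarrow> (nat \<Rightarrow> nat) \<Rightarrow> nat list" where
  "symbols ps x = exec ps x []"

definition received :: "step list \<Rightarrow> (nat \<Rightarrow> nat) \<Rightarrow> nat \<Rightarrow> nat list" where
  "received ps x i = map snd (filter (\<lambda>(r, _). r = i) (zip (map receiver ps) (symbols ps x)))"

definition inputs :: "nat \<Rightarrow> nat \<Rightarrow> (nat \<Rightarrow> nat) set" where
  "inputs n M = PiE {1..n} (\<lambda>_. {1..M})"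

definition valid_protocol :: "nat \<Rightarrow> protocol \<Rightarrow> bool" where
  "valid_protocol n P \<longleftrightarrow> (\<forall>s \<in> set (fst P).
      sender s \<in> {1..n} \<and> receiver s \<in> {1..n} \<and> sender s \<noteq> receiver s)"

definition S :: "nat \<Rightarrow> nat \<Rightarrow> protocol \<Rightarrow> nat \<Rightarrow> nat" where
  "S n M P l = card ((\<lambda>x. symbols (fst P) x ! l) ` inputs n M)"

definition complexity :: "nat \<Rightarrow> nat \<Rightarrow> protocol \<Rightarrow> real" where
  "complexity n M P = (\<Sum>l < length (fst P). log 2 (real (S n M P l)))"

definition EQ :: "protocol \<Rightarrow> (nat \<Rightarrow> nat) \<Rightarrow> nat \<Rightarrow> bool" where
  "EQ P x i = snd P i (x i) (received (fst P) x i)"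

definition all_equal :: "nat \<Rightarrow> (nat \<Rightarrow> nat) \<Rightarrow> bool" where
  "all_equal n x \<longleftrightarrow> (\<forall>i \<in> {1..n}. \<forall>j \<in> {1..n}. x i = x j)"

definition solves_AD :: "nat \<Rightarrow> nat \<Rightarrow> protocol \<Rightarrow> bool" where
  "solves_AD n M P \<longleftrightarrow> (\<forall>x \<in> inputs n M.
      (\<forall>i \<in> {1..n}. \<not> EQ P x i) \<longleftrightarrow> all_equal n x)"

definition solves_CD :: "nat \<Rightarrow> nat \<Rightarrow> protocol \<Rightarrow> bool" where
  "solves_CD n M P \<longleftrightarrow> (\<forall>x \<in> inputs n M. (\<not> EQ P x n) \<longleftrightarrow> all_equal n x)"

definition C_AD :: "nat \<Rightarrow> nat \<Rightarrow> real" where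
  "C_AD n M = Inf {complexity n M P | P. valid_protocol n P \<and> solves_AD n M P}"

definition C_CD :: "nat \<Rightarrow> nat \<Rightarrow> real" where
  "C_CD n M = Inf {complexity n M P | P. valid_protocol n P \<and> solves_CD n M P}"

end

theory Submission
  imports Defs
begin


lemma exec_append:
  "exec (ps @ qs) x h = exec ps x h @ exec qs x (h @ zip (map receiver ps) (exec ps x h))"
  by (induction ps arbitrary: h) (simp_all add: Let_def)

lemma length_exec[simp]: "length (exec ps x h) = length ps"
  by (induction ps arbitrary: h) (simp_all add: Let_def)

lemma length_symbols[simp]: "length (symbols ps x) = length ps"
  by (simp add: symbols_def)

lemma symbols_snoc:
  "symbols (ps @ [p]) x = symbols ps x @
     [msgfun p (x (sender p)) (map snd (filter (\<lambda>(r, _). r = sender p) (zip (map receiver ps) (symbols ps x))))]"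
  by (simp add: symbols_def exec_append Let_def)

lemma symbols_snoc_nth:
  "l < length ps \<Longrightarrow> symbols (ps @ [p]) x ! l = symbols ps x ! l"
  by (simp add: symbols_snoc nth_append)

lemma filt_eq:
  "length xs = length rs \<Longrightarrow> length ys = length rs \<Longrightarrow>
   (\<forall>l<length rs. rs!l = i \<longrightarrow> xs!l = ys!l) \<Longrightarrow>
   map snd (filter (\<lambda>(r,_). r = i) (zip rs xs)) = map snd (filter (\<lambda>(r,_). r = i) (zip rs ys))"
proof (induction rs arbitrary: xs ys)
  case Nil then show ?case by simp
next
  case (Cons a rs)
  obtain x xs' where xs: "xs = x # xs'" using Cons.prems(1) by (cases xs) auto
  obtain y ys' where ys: "ys = y # ys'" using Cons.prems(2) by (cases ys) auto
  have h0: "a = i \<longrightarrow> x = y"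
  proof
    assume "a = i"
    then show "x = y" using Cons.prems(3)[rule_format, of 0] xs ys by simp
  qed
  have h1: "\<forall>l<length rs. rs!l = i \<longrightarrow> xs'!l = ys'!l"
  proof (intro allI impI)
    fix l assume "l < length rs" "rs!l = i"
    then show "xs'!l = ys'!l" using Cons.prems(3)[rule_format, of "Suc l"] xs ys by simp
  qed
  have l1: "length xs' = length rs" "length ys' = length rs" using Cons.prems(1,2) xs ys by simp_all
  have "map snd (filter (\<lambda>(r,_). r = i) (zip rs xs')) = map snd (filter (\<lambda>(r,_). r = i) (zip rs ys'))"
    by (rule Cons.IH[OF l1 h1])
  then show ?case using xs ys h0 by simp
qed

lemma consist:
  assumes "\<forall>s\<in>set ps. sender s \<in> N"
    and "\<forall>i\<in>N. dg (w i) i = w i"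
    and "\<forall>l<length ps. symbols ps (dg (w (sender (ps!l)))) ! l = symbols ps (dg (w (receiver (ps!l)))) ! l"
  shows "\<forall>l<length ps. symbols ps w ! l = symbols ps (dg (w (sender (ps!l)))) ! l"
  using assms(1,3)
proof (induction ps rule: rev_induct)
  case Nil then show ?case by simp
next
  case (snoc p ps)
  have hyp: "\<forall>l<length ps. symbols ps (dg (w (sender (ps!l)))) ! l = symbols ps (dg (w (receiver (ps!l)))) ! l"
  proof (intro allI impI)
    fix l assume l: "l < length ps"
    have "symbols (ps@[p]) (dg (w (sender ((ps@[p])!l)))) ! l = symbols (ps@[p]) (dg (w (receiver ((ps@[p])!l)))) ! l"
      using snoc.prems(2) l by simp
    then show "symbols ps (dg (w (sender (ps!l)))) ! l = symbols ps (dg (w (receiver (ps!l)))) ! l"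
      using l by (simp add: symbols_snoc_nth nth_append)
  qed
  have IH: "\<forall>l<length ps. symbols ps w ! l = symbols ps (dg (w (sender (ps!l)))) ! l"
    using snoc.IH snoc.prems(1) hyp by (simp del: nth_append)
  show ?case
  proof (intro allI impI)
    fix l assume l: "l < length (ps @ [p])"
    show "symbols (ps@[p]) w ! l = symbols (ps@[p]) (dg (w (sender ((ps@[p])!l)))) ! l"
    proof (cases "l < length ps")
      case True then show ?thesis using IH by (simp add: symbols_snoc_nth nth_append)
    next
      case False
      then have ll: "l = length ps" using l by simp
      define T where "T = sender p"
      have TN: "T \<in> N" using snoc.prems(1) T_def by simp
      have dT: "dg (w T) T = w T" using assms(2) TN by simp
      have fe: "map snd (filter (\<lambda>(r,_). r = T) (zip (map receiver ps) (symbols ps w)))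
          = map snd (filter (\<lambda>(r,_). r = T) (zip (map receiver ps) (symbols ps (dg (w T)))))"
      proof (rule filt_eq)
        show "\<forall>la<length (map receiver ps). map receiver ps ! la = T \<longrightarrow> symbols ps w ! la = symbols ps (dg (w T)) ! la"
        proof (intro allI impI)
          fix la assume la: "la < length (map receiver ps)" and r: "map receiver ps ! la = T"
          have la': "la < length ps" using la by simp
          have "symbols ps w ! la = symbols ps (dg (w (sender (ps!la)))) ! la" using IH la' by blast
          also have "\<dots> = symbols ps (dg (w (receiver (ps!la)))) ! la" using hyp la' by blast
          also have "receiver (ps!la) = T" using r la' by simp
          finally show "symbols ps w ! la = symbols ps (dg (w T)) ! la" .
        qed
      qed simp_all
      show ?thesis using ll fe dT by (simp add: symbols_snoc nth_append T_def)
    qed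
  qed
qed

lemma received_eq:
  assumes "\<forall>l<length ps. symbols ps w ! l = symbols ps (dg (w (sender (ps!l)))) ! l"
    and "\<forall>l<length ps. symbols ps (dg (w (sender (ps!l)))) ! l = symbols ps (dg (w (receiver (ps!l)))) ! l"
  shows "received ps w i = received ps (dg (w i)) i"
  unfolding received_def
proof (rule filt_eq)
  show "\<forall>l<length (map receiver ps). map receiver ps ! l = i \<longrightarrow> symbols ps w ! l = symbols ps (dg (w i)) ! l"
  proof (intro allI impI)
    fix l assume la: "l < length (map receiver ps)" and r: "map receiver ps ! l = i"
    have la': "l < length ps" using la by simp
    have "symbols ps w ! l = symbols ps (dg (w (sender (ps!l)))) ! l" using assms(1) la' by blast
    also have "\<dots> = symbols ps (dg (w (receiver (ps!l)))) ! l" using assms(2) la' by blast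
    also have "receiver (ps!l) = i" using r la' by simp
    finally show "symbols ps w ! l = symbols ps (dg (w i)) ! l" .
  qed
qed simp_all



lemma G0:
  fixes f g h :: "nat \<Rightarrow> 'a"
  defines "A \<equiv> {1..4::nat}"
  assumes fg: "card (f`A) * card (g`A) \<le> 4" and hh: "card (h`A) \<le> 3"
  shows "\<exists>p\<in>A. \<exists>q\<in>A. \<exists>r\<in>A. \<not>(p=q \<and> q=r) \<and> f p = f q \<and> g p = g r \<and> h q = h r"
proof (cases "inj_on (\<lambda>c. (f c, g c)) A")
  case False
  then obtain p p' where "p \<in> A" "p' \<in> A" "p \<noteq> p'" "f p = f p'" "g p = g p'"
    unfolding inj_on_def by auto
  then show ?thesis by blast
next
  case True
  have cA: "card A = 4" unfolding A_def by simp
  have fin: "finite A" unfolding A_def by simp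
  have c1: "card ((\<lambda>c. (f c, g c)) ` A) = 4" using card_image[OF True] cA by simp
  have sub: "(\<lambda>c. (f c, g c)) ` A \<subseteq> f`A \<times> g`A" by auto
  have c2: "card (f`A \<times> g`A) \<le> 4" using fg by (simp add: card_cartesian_product)
  have eq: "(\<lambda>c. (f c, g c)) ` A = f`A \<times> g`A"
  proof (rule card_subset_eq)
    show "finite (f`A \<times> g`A)" using fin by simp
    have "card ((\<lambda>c. (f c, g c)) ` A) \<le> card (f`A \<times> g`A)" by (rule card_mono) (use fin sub in auto)
    then show "card ((\<lambda>c. (f c, g c)) ` A) = card (f`A \<times> g`A)" using c1 c2 by simp
  qed (rule sub)
  have "\<not> inj_on h A"
  proof
    assume "inj_on h A"
    then have "card (h`A) = 4" using card_image cA by metis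
    then show False using hh by simp
  qed
  then obtain q r where qr: "q \<in> A" "r \<in> A" "q \<noteq> r" "h q = h r"
    unfolding inj_on_def by auto
  have "(f q, g r) \<in> f`A \<times> g`A" using qr by auto
  then have "(f q, g r) \<in> (\<lambda>c. (f c, g c)) ` A" using eq by simp
  then obtain p where "p \<in> A" "(f q, g r) = (f p, g p)" by blast
  then have "p \<in> A" "f p = f q" "g p = g r" by auto
  then show ?thesis using qr by blast
qed

lemma card_img_bounds:
  fixes f :: "nat \<Rightarrow> 'a"
  shows "1 \<le> card (f ` {1..4::nat}) \<and> card (f ` {1..4::nat}) \<le> 4"
proof
  show "1 \<le> card (f ` {1..4::nat})"
    by (metis One_nat_def Suc_leI card_gt_0_iff finite_atLeastAtMost finite_imageI image_is_empty atLeastAtMost_iff empty_iff le_numeral_extra(4) one_le_numeral)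
  show "card (f ` {1..4::nat}) \<le> 4"
    using card_image_le[of "{1..4::nat}" f] by simp
qed

lemma arith_choice:
  fixes a b c :: nat
  assumes "1 \<le> a" "a \<le> 4" "1 \<le> b" "b \<le> 4" "1 \<le> c" "c \<le> 4" "a*b*c \<le> 15"
  shows "(a*b \<le> 4 \<and> c \<le> 3) \<or> (a*c \<le> 4 \<and> b \<le> 3) \<or> (b*c \<le> 4 \<and> a \<le> 3)"
proof -
  have "a = 1 \<or> a = 2 \<or> a = 3 \<or> a = 4" "b = 1 \<or> b = 2 \<or> b = 3 \<or> b = 4" "c = 1 \<or> c = 2 \<or> c = 3 \<or> c = 4" using assms by auto
  then show ?thesis using assms(7) by (elim disjE; simp)
qed

lemma triple:
  fixes F12 F13 F23 :: "nat \<Rightarrow> 'a"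
  defines "A \<equiv> {1..4::nat}"
  assumes "card (F12`A) * card (F13`A) * card (F23`A) \<le> 15"
  shows "\<exists>p\<in>A. \<exists>q\<in>A. \<exists>r\<in>A. \<not>(p=q \<and> q=r) \<and> F12 p = F12 q \<and> F13 p = F13 r \<and> F23 q = F23 r"
proof -
  have b: "1 \<le> card (F12`A)" "card (F12`A) \<le> 4" "1 \<le> card (F13`A)" "card (F13`A) \<le> 4"
      "1 \<le> card (F23`A)" "card (F23`A) \<le> 4"
    using card_img_bounds unfolding A_def by blast+
  from arith_choice[OF b assms(2)] consider
    "card (F12`A) * card (F13`A) \<le> 4 \<and> card (F23`A) \<le> 3"
  | "card (F12`A) * card (F23`A) \<le> 4 \<and> card (F13`A) \<le> 3"
  | "card (F13`A) * card (F23`A) \<le> 4 \<and> card (F12`A) \<le> 3" by blast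
  then show ?thesis
  proof cases
    case 1
    then show ?thesis using G0[of F12 F13 F23] unfolding A_def by blast
  next
    case 2
    then obtain a b c where "a\<in>A" "b\<in>A" "c\<in>A" "\<not>(a=b \<and> b=c)" "F12 a = F12 b" "F23 a = F23 c" "F13 b = F13 c"
      using G0[of F12 F23 F13] unfolding A_def by blast
    then show ?thesis by (metis (full_types))
  next
    case 3
    then obtain a b c where "a\<in>A" "b\<in>A" "c\<in>A" "\<not>(a=b \<and> b=c)" "F13 a = F13 b" "F23 a = F23 c" "F12 b = F12 c"
      using G0[of F13 F23 F12] unfolding A_def by blast
    then show ?thesis by (metis (full_types))
  qed
qed



definition mk3 :: "nat \<Rightarrow> nat \<Rightarrow> nat \<Rightarrow> nat \<Rightarrow> nat" where
  "mk3 p q r = (\<lambda>i. if i = 1 then p else if i = 2 then q else if i = 3 then r else undefined)"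

definition dg :: "nat \<Rightarrow> nat \<Rightarrow> nat" where "dg c = mk3 c c c"

lemma mk3_in: "p \<in> {1..4} \<Longrightarrow> q \<in> {1..4} \<Longrightarrow> r \<in> {1..4} \<Longrightarrow> mk3 p q r \<in> inputs 3 4"
  unfolding inputs_def PiE_def extensional_def Pi_def mk3_def by auto

lemma dg_in: "c \<in> {1..4} \<Longrightarrow> dg c \<in> inputs 3 4"
  unfolding dg_def by (rule mk3_in) auto

lemma finite_inputs: "finite (inputs n M)"
  unfolding inputs_def by (simp add: finite_PiE)

lemma S_pos: "1 \<le> S 3 4 P l"
proof -
  have "dg 1 \<in> inputs 3 4" by (rule dg_in) simp
  then have "(\<lambda>x. symbols (fst P) x ! l) ` inputs 3 4 \<noteq> {}" by blast
  then show ?thesis unfolding S_def using finite_inputs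
    by (metis One_nat_def Suc_leI card_gt_0_iff finite_imageI)
qed

lemma sum_log_prod:
  fixes f :: "nat \<Rightarrow> nat" and n :: nat
  assumes "\<forall>l. 0 < f l"
  shows "(\<Sum>l<n. log 2 (real (f l))) = log 2 (\<Prod>l<n. real (f l))"
proof (induction n)
  case 0 then show ?case by simp
next
  case (Suc n)
  have "0 < (\<Prod>l<n. real (f l))" using assms by (simp add: prod_pos)
  moreover have "0 < real (f n)" using assms by simp
  ultimately show ?case using Suc by (simp add: log_mult_pos)
qed

lemma card_F_le:
  fixes P :: protocol and E :: "nat set"
  assumes fin: "finite E"
  shows "card ((\<lambda>c. restrict (\<lambda>l. symbols (fst P) (dg c) ! l) E) ` {1..4}) \<le> (\<Prod>l\<in>E. S 3 4 P l)"
proof -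
  have sub: "(\<lambda>c. restrict (\<lambda>l. symbols (fst P) (dg c) ! l) E) ` {1..4}
      \<subseteq> PiE E (\<lambda>l. (\<lambda>x. symbols (fst P) x ! l) ` inputs 3 4)"
    using dg_in by (auto simp: restrict_PiE_iff)
  have "finite (PiE E (\<lambda>l. (\<lambda>x. symbols (fst P) x ! l) ` inputs 3 4))"
    using fin finite_inputs by (simp add: finite_PiE)
  then have "card ((\<lambda>c. restrict (\<lambda>l. symbols (fst P) (dg c) ! l) E) ` {1..4})
       \<le> card (PiE E (\<lambda>l. (\<lambda>x. symbols (fst P) x ! l) ` inputs 3 4))"
    using sub by (rule card_mono)
  also have "\<dots> = (\<Prod>l\<in>E. S 3 4 P l)" using fin by (simp add: card_PiE S_def)
  finally show ?thesis .
qed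

lemma lower:
  assumes valid: "valid_protocol 3 P" and solv: "solves_AD 3 4 P \<or> solves_CD 3 4 P"
  shows "4 \<le> complexity 3 4 P"
proof (rule ccontr)
  assume "\<not> 4 \<le> complexity 3 4 P"
  then have lt: "complexity 3 4 P < 4" by simp
  define ps where "ps = fst P"
  define L where "L = length ps"
  define Sv where "Sv = S 3 4 P"
  have Spos: "\<forall>l. 0 < Sv l" using S_pos[of P] unfolding Sv_def by (simp add: Suc_le_eq)
  have "complexity 3 4 P = log 2 (\<Prod>l<L. real (Sv l))"
    unfolding complexity_def L_def ps_def Sv_def using sum_log_prod[OF Spos[unfolded Sv_def]] by simp
  then have "log 2 (\<Prod>l<L. real (Sv l)) < 4" using lt by simp
  moreover have "0 < (\<Prod>l<L. real (Sv l))" using Spos by (simp add: prod_pos)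
  ultimately have "(\<Prod>l<L. real (Sv l)) < 2 powr 4" by (simp add: log_less_iff)
  then have "real (\<Prod>l<L. Sv l) < 16" by simp
  then have prod15: "(\<Prod>l<L. Sv l) \<le> 15" by linarith
  define E where "E e = {l. l < L \<and> {sender (ps!l), receiver (ps!l)} = e}" for e
  define F where "F e c = restrict (\<lambda>l. symbols ps (dg c) ! l) (E e)" for e c
  have finE: "finite (E e)" for e unfolding E_def by simp
  have cardF: "card (F e ` {1..4}) \<le> (\<Prod>l\<in>E e. Sv l)" for e
    unfolding F_def Sv_def ps_def using card_F_le[OF finE] by simp
  have nodes: "sender (ps!l) \<in> {1,2,3} \<and> receiver (ps!l) \<in> {1,2,3} \<and> sender (ps!l) \<noteq> receiver (ps!l)"
    if "l < L" for l
  proof -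
    have "ps!l \<in> set ps" using that L_def by simp
    then show ?thesis using valid unfolding valid_protocol_def ps_def by auto
  qed
  have un: "{..<L} = (E {1,2} \<union> E {1,3}) \<union> E {2,3}"
  proof
    show "{..<L} \<subseteq> (E {1,2} \<union> E {1,3}) \<union> E {2,3}"
    proof
      fix l assume "l \<in> {..<L}"
      then have l: "l < L" by simp
      from nodes[OF l] show "l \<in> (E {1,2} \<union> E {1,3}) \<union> E {2,3}"
        unfolding E_def using l by (auto simp: insert_commute)
    qed
  qed (auto simp: E_def)
  have d1: "E {1,2} \<inter> E {1,3} = {}" unfolding E_def by (auto simp: doubleton_eq_iff)
  have d2: "(E {1,2} \<union> E {1,3}) \<inter> E {2,3} = {}" unfolding E_def by (auto simp: doubleton_eq_iff)
  have pe: "(\<Prod>l<L. Sv l) = (\<Prod>l\<in>E {1,2}. Sv l) * (\<Prod>l\<in>E {1,3}. Sv l) * (\<Prod>l\<in>E {2,3}. Sv l)"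
    unfolding un using d1 d2 finE by (simp add: prod.union_disjoint)
  have "card (F {1,2} ` {1..4}) * card (F {1,3} ` {1..4}) * card (F {2,3} ` {1..4})
      \<le> (\<Prod>l\<in>E {1,2}. Sv l) * (\<Prod>l\<in>E {1,3}. Sv l) * (\<Prod>l\<in>E {2,3}. Sv l)"
    by (intro mult_le_mono cardF)
  then have "card (F {1,2} ` {1..4}) * card (F {1,3} ` {1..4}) * card (F {2,3} ` {1..4}) \<le> 15"
    using prod15 pe by linarith
  then obtain p q r where pqr: "p \<in> {1..4}" "q \<in> {1..4}" "r \<in> {1..4}" "\<not>(p=q \<and> q=r)"
      "F {1,2} p = F {1,2} q" "F {1,3} p = F {1,3} r" "F {2,3} q = F {2,3} r"
    using triple[of "F {1,2}" "F {1,3}" "F {2,3}"] by blast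
  define w where "w = mk3 p q r"
  have w123: "w 1 = p" "w 2 = q" "w 3 = r" unfolding w_def mk3_def by auto
  have win: "w \<in> inputs 3 4" unfolding w_def using pqr by (simp add: mk3_in)
  have k12: "F {1,2} (w 1) = F {1,2} (w 2)" using pqr(5) unfolding w123 .
  have k13: "F {1,3} (w 1) = F {1,3} (w 3)" using pqr(6) unfolding w123 .
  have k23: "F {2,3} (w 2) = F {2,3} (w 3)" using pqr(7) unfolding w123 .
  have c21: "{2,1} = {1,2::nat}" "{3,1} = {1,3::nat}" "{3,2} = {2,3::nat}" by auto
  have key: "F {a,b} (w a) = F {a,b} (w b)" if "a \<in> {1,2,3}" "b \<in> {1,2,3}" for a b
  proof -
    have "a = 1 \<or> a = 2 \<or> a = 3" "b = 1 \<or> b = 2 \<or> b = 3" using that by auto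
    then show ?thesis
    proof (elim disjE)
    qed (simp_all only: c21 k12 k13 k23 refl)
  qed
  have hyp: "\<forall>l<length ps. symbols ps (dg (w (sender (ps!l)))) ! l = symbols ps (dg (w (receiver (ps!l)))) ! l"
  proof (intro allI impI)
    fix l assume l: "l < length ps"
    define T where "T = sender (ps!l)"
    define R where "R = receiver (ps!l)"
    have lL: "l < L" using l L_def by simp
    have TR: "T \<in> {1,2,3}" "R \<in> {1,2,3}" using nodes[OF lL] unfolding T_def R_def by simp_all
    have lE: "l \<in> E {T,R}" unfolding E_def T_def R_def using l L_def by simp
    have "F {T,R} (w T) l = F {T,R} (w R) l" using key[OF TR] by simp
    then show "symbols ps (dg (w (sender (ps!l)))) ! l = symbols ps (dg (w (receiver (ps!l)))) ! l"
      using lE unfolding F_def T_def R_def by simp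
  qed
  have wdg: "\<forall>i\<in>{1..3::nat}. dg (w i) i = w i" unfolding dg_def mk3_def by auto
  have sendN: "\<forall>s\<in>set ps. sender s \<in> {1..3::nat}" using valid unfolding valid_protocol_def ps_def by auto
  have cons: "\<forall>l<length ps. symbols ps w ! l = symbols ps (dg (w (sender (ps!l)))) ! l"
    by (rule consist[OF sendN wdg hyp])
  have EQeq: "EQ P w i = EQ P (dg (w i)) i" if "i \<in> {1..3}" for i
  proof -
    have "received ps w i = received ps (dg (w i)) i" by (rule received_eq[OF cons hyp])
    moreover have "dg (w i) i = w i" using wdg that by simp
    ultimately show ?thesis unfolding EQ_def ps_def by simp
  qed
  have wi: "w i \<in> {1..4}" if "i \<in> {1..3::nat}" for i
    using win that unfolding inputs_def by (auto simp: PiE_iff)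
  have dgeq: "all_equal 3 (dg c)" for c unfolding all_equal_def dg_def mk3_def by auto
  have wne: "\<not> all_equal 3 w"
  proof
    assume ae: "all_equal 3 w"
    have "w 1 = w 2" using ae unfolding all_equal_def by simp
    moreover have "w 2 = w 3" using ae unfolding all_equal_def by simp
    ultimately show False using pqr(4) unfolding w123 by simp
  qed
  from solv show False
  proof
    assume ad: "solves_AD 3 4 P"
    have "\<forall>i\<in>{1..3}. \<not> EQ P w i"
    proof
      fix i :: nat assume i: "i \<in> {1..3}"
      have "dg (w i) \<in> inputs 3 4" using dg_in wi[OF i] by simp
      then have "\<forall>j\<in>{1..3}. \<not> EQ P (dg (w i)) j" using ad[unfolded solves_AD_def] dgeq by blast
      then have "\<not> EQ P (dg (w i)) i" using i by blast
      then show "\<not> EQ P w i" using EQeq[OF i] by simp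
    qed
    then have "all_equal 3 w" using ad[unfolded solves_AD_def] win by blast
    then show False using wne by simp
  next
    assume cd: "solves_CD 3 4 P"
    have i3: "(3::nat) \<in> {1..3}" by simp
    have "dg (w 3) \<in> inputs 3 4" using dg_in wi[OF i3] by simp
    then have "\<not> EQ P (dg (w 3)) 3" using cd[unfolded solves_CD_def] dgeq by blast
    then have "\<not> EQ P w 3" using EQeq[OF i3] by simp
    then have "all_equal 3 w" using cd[unfolded solves_CD_def] win by blast
    then show False using wne by simp
  qed
qed



definition P0 :: protocol where
  "P0 = ([(1, 3, \<lambda>x h. x), (2, 3, \<lambda>x h. x)], \<lambda>i xi rcv. i = 3 \<and> rcv \<noteq> [xi, xi])"

lemma sym_P0: "symbols (fst P0) x = [x 1, x 2]"
  by (simp add: P0_def symbols_def Let_def msgfun_def sender_def receiver_def)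

lemma rec_P0: "received (fst P0) x 3 = [x 1, x 2]"
  unfolding received_def sym_P0 by (simp add: P0_def receiver_def)

lemma valid_P0: "valid_protocol 3 P0"
  by (simp add: valid_protocol_def P0_def sender_def receiver_def)

lemma EQ_P0: "EQ P0 x i = (i = 3 \<and> \<not> (x 1 = x 3 \<and> x 2 = x 3))"
proof (cases "i = 3")
  case True then show ?thesis unfolding EQ_def using rec_P0 by (auto simp: P0_def)
next
  case False then show ?thesis unfolding EQ_def by (simp add: P0_def)
qed

lemma ae3: "all_equal 3 x \<longleftrightarrow> (x 1 = x 3 \<and> x 2 = x 3)"
proof
  assume "all_equal 3 x" then show "x 1 = x 3 \<and> x 2 = x 3" unfolding all_equal_def by simp
next
  assume h: "x 1 = x 3 \<and> x 2 = x 3"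
  have d: "i \<in> {1..3} \<Longrightarrow> x i = x 3" for i
  proof -
    assume "i \<in> {1..3}"
    then have "i = 1 \<or> i = 2 \<or> i = (3::nat)" by auto
    then show "x i = x 3" using h by (elim disjE) simp_all
  qed
  show "all_equal 3 x" unfolding all_equal_def
  proof (intro ballI)
    fix i j :: nat assume "i \<in> {1..3}" "j \<in> {1..3}"
    then show "x i = x j" using d by metis
  qed
qed

lemma solves_P0: "solves_AD 3 4 P0" "solves_CD 3 4 P0"
proof -
  have i3: "(3::nat) \<in> {1..3}" by simp
  show "solves_AD 3 4 P0" unfolding solves_AD_def
  proof (intro ballI)
    fix x :: "nat \<Rightarrow> nat"
    have "(\<forall>i\<in>{1..3}. \<not> EQ P0 x i) \<longleftrightarrow> \<not> EQ P0 x 3"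
    proof
      assume "\<forall>i\<in>{1..3}. \<not> EQ P0 x i" then show "\<not> EQ P0 x 3" using i3 by blast
    next
      assume "\<not> EQ P0 x 3" then show "\<forall>i\<in>{1..3}. \<not> EQ P0 x i"
        unfolding EQ_P0 by blast
    qed
    also have "\<dots> \<longleftrightarrow> all_equal 3 x" unfolding EQ_P0 ae3 by blast
    finally show "(\<forall>i\<in>{1..3}. \<not> EQ P0 x i) \<longleftrightarrow> all_equal 3 x" .
  qed
  show "solves_CD 3 4 P0" unfolding solves_CD_def EQ_P0 ae3 by blast
qed

lemma proj_img: "i \<in> {1..3} \<Longrightarrow> (\<lambda>x. x i) ` inputs 3 4 = {1..4}"
proof
  assume i: "i \<in> {1..3}"
  show "(\<lambda>x. x i) ` inputs 3 4 \<subseteq> {1..4}" using i unfolding inputs_def by (auto simp: PiE_iff)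
  show "{1..4} \<subseteq> (\<lambda>x. x i) ` inputs 3 4"
  proof
    fix v :: nat assume v: "v \<in> {1..4}"
    have "dg v i = v" using i unfolding dg_def mk3_def by auto
    moreover have "dg v \<in> inputs 3 4" using dg_in v by simp
    ultimately show "v \<in> (\<lambda>x. x i) ` inputs 3 4" by (metis image_eqI)
  qed
qed

lemma complexity_P0: "complexity 3 4 P0 = 4"
proof -
  have l: "length (fst P0) = 2" by (simp add: P0_def)
  have s0: "S 3 4 P0 0 = 4"
    unfolding S_def sym_P0 using proj_img[of 1] by simp
  have s1: "S 3 4 P0 1 = 4"
    unfolding S_def sym_P0 using proj_img[of 2] by simp
  have lg: "log 2 (4::real) = 2"
    using log_pow_cancel[of "2::real" 2] by simp
  have "{..<2::nat} = {0,1}" by auto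
  then have "complexity 3 4 P0 = log 2 (real (S 3 4 P0 0)) + log 2 (real (S 3 4 P0 1))"
    unfolding complexity_def l by simp
  then show ?thesis using s0 s1 lg by simp
qed

theorem mainTheorem9:
  shows "C_AD 3 4 = 4 \<and> C_CD 3 4 = 4"
proof
  show "C_AD 3 4 = 4" unfolding C_AD_def
  proof (rule cInf_eq_minimum)
    have "\<exists>P. 4 = complexity 3 4 P \<and> valid_protocol 3 P \<and> solves_AD 3 4 P"
      by (rule exI[of _ P0]) (simp only: valid_P0 solves_P0 complexity_P0 simp_thms)
    then show "4 \<in> {complexity 3 4 P |P. valid_protocol 3 P \<and> solves_AD 3 4 P}" by simp
  next
    fix x assume "x \<in> {complexity 3 4 P |P. valid_protocol 3 P \<and> solves_AD 3 4 P}"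
    then show "4 \<le> x" using lower by blast
  qed
  show "C_CD 3 4 = 4" unfolding C_CD_def
  proof (rule cInf_eq_minimum)
    have "\<exists>P. 4 = complexity 3 4 P \<and> valid_protocol 3 P \<and> solves_CD 3 4 P"
      by (rule exI[of _ P0]) (simp only: valid_P0 solves_P0 complexity_P0 simp_thms)
    then show "4 \<in> {complexity 3 4 P |P. valid_protocol 3 P \<and> solves_CD 3 4 P}" by simp
  next
    fix x assume "x \<in> {complexity 3 4 P |P. valid_protocol 3 P \<and> solves_CD 3 4 P}"
    then show "4 \<le> x" using lower by blast
  qed
qed


end
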